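(* If $d_{GH}\bigl(\mathcal{H}(X),\mathcal{H}(Y)\bigr) = d_{GH}(X,Y)$ for all finite metric spaces $X,Y$ in general position, then $d_{GH}\bigl(\mathcal{H}(X),\mathcal{H}(Y)\bigr) = d_{GH}(X,Y)$ for all compact metric spaces $X,Y$.
   Context: A finite metric space is in general position if all its nonzero distances are pairwise distinct and all triangle inequalities among its points are strict. $d_{GH}$ is the Gromov–Hausdorff distance (the infimum of $r$ such that there is a metric space $Z$ containing isometric copies $X',Y'$ of $X,Y$ with Hausdorff distance $|X'Y'|_Z\le r$). For a compact metric space $X$, $\mathcal{H}(X)$ is the set of all nonempty closed subsets of $X$ with the Hausdorff distance $|AB| = \max\{\sup_{a\in A}\inf_{b\in B}|ab|, \sup_{b\in B}\inf_{a\in A}|ab|\}$. *)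

theory Defs
  imports "HOL-Analysis.Analysis"
begin

definition hdist :: "('a \<Rightarrow> 'a \<Rightarrow> real) \<Rightarrow> 'a set \<Rightarrow> 'a set \<Rightarrow> real" where
  "hdist d A B = max (SUP a\<in>A. INF b\<in>B. d a b) (SUP b\<in>B. INF a\<in>A. d a b)"

text \<open>Hyperspace H(X): nonempty closed subsets of the metric space (M,d); its metric is hdist d.\<close>
definition hyperspace :: "'a set \<Rightarrow> ('a \<Rightarrow> 'a \<Rightarrow> real) \<Rightarrow> 'a set set" where
  "hyperspace M d = {A. A \<subseteq> M \<and> A \<noteq> {} \<and> closedin (Metric_space.mtopology M d) A}"

text \<open>Such pseudometrics correspond exactly to metric spaces Z containing isometric
  copies of X and Y (take the metric quotient / pull back along the embeddings).\<close>
definition admissible ::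
  "'a set \<Rightarrow> ('a \<Rightarrow> 'a \<Rightarrow> real) \<Rightarrow> 'b set \<Rightarrow> ('b \<Rightarrow> 'b \<Rightarrow> real)
    \<Rightarrow> ('a + 'b \<Rightarrow> 'a + 'b \<Rightarrow> real) \<Rightarrow> bool" where
  "admissible X dX Y dY D \<longleftrightarrow>
     (\<forall>x\<in>X. \<forall>x'\<in>X. D (Inl x) (Inl x') = dX x x') \<and>
     (\<forall>y\<in>Y. \<forall>y'\<in>Y. D (Inr y) (Inr y') = dY y y') \<and>
     (\<forall>u\<in>Inl ` X \<union> Inr ` Y. D u u = 0) \<and>
     (\<forall>u\<in>Inl ` X \<union> Inr ` Y. \<forall>v\<in>Inl ` X \<union> Inr ` Y. 0 \<le> D u v \<and> D u v = D v u) \<and>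
     (\<forall>u\<in>Inl ` X \<union> Inr ` Y. \<forall>v\<in>Inl ` X \<union> Inr ` Y. \<forall>w\<in>Inl ` X \<union> Inr ` Y.
        D u w \<le> D u v + D v w)"

definition gh_dist ::
  "'a set \<Rightarrow> ('a \<Rightarrow> 'a \<Rightarrow> real) \<Rightarrow> 'b set \<Rightarrow> ('b \<Rightarrow> 'b \<Rightarrow> real) \<Rightarrow> real" where
  "gh_dist X dX Y dY = Inf {hdist D (Inl ` X) (Inr ` Y) | D. admissible X dX Y dY D}"

definition general_position :: "'a set \<Rightarrow> ('a \<Rightarrow> 'a \<Rightarrow> real) \<Rightarrow> bool" where
  "general_position M d \<longleftrightarrow>
     (\<forall>x\<in>M. \<forall>y\<in>M. \<forall>u\<in>M. \<forall>v\<in>M. x \<noteq> y \<and> u \<noteq> v \<and> {x, y} \<noteq> {u, v} \<longrightarrow> d x y \<noteq> d u v) \<and>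
     (\<forall>x\<in>M. \<forall>y\<in>M. \<forall>z\<in>M. x \<noteq> y \<and> y \<noteq> z \<and> x \<noteq> z \<longrightarrow> d x z < d x y + d y z)"

end

theory Submission
  imports Defs
begin


definition pm :: "'a set \<Rightarrow> ('a \<Rightarrow> 'a \<Rightarrow> real) \<Rightarrow> bool" where
  "pm S d \<longleftrightarrow> (\<forall>x\<in>S. d x x = 0) \<and> (\<forall>x\<in>S. \<forall>y\<in>S. 0 \<le> d x y \<and> d x y = d y x) \<and>
     (\<forall>x\<in>S. \<forall>y\<in>S. \<forall>z\<in>S. d x z \<le> d x y + d y z)"

definition bnd :: "'a set \<Rightarrow> ('a \<Rightarrow> 'a \<Rightarrow> real) \<Rightarrow> bool" where
  "bnd S d \<longleftrightarrow> (\<exists>c. \<forall>x\<in>S. \<forall>y\<in>S. d x y \<le> c)"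

lemma pm_D: assumes "pm S d"
  shows "x \<in> S \<Longrightarrow> d x x = 0" "x \<in> S \<Longrightarrow> y \<in> S \<Longrightarrow> 0 \<le> d x y"
    "x \<in> S \<Longrightarrow> y \<in> S \<Longrightarrow> d x y = d y x"
    "x \<in> S \<Longrightarrow> y \<in> S \<Longrightarrow> z \<in> S \<Longrightarrow> d x z \<le> d x y + d y z"
  using assms unfolding pm_def by blast+

locale hd =
  fixes S :: "'a set" and d :: "'a \<Rightarrow> 'a \<Rightarrow> real"
  assumes pm: "pm S d"
begin

lemma bb: "a \<in> S \<Longrightarrow> B \<subseteq> S \<Longrightarrow> bdd_below ((\<lambda>b. d a b) ` B)"
  by (rule bdd_belowI[where m=0]) (auto intro: pm_D(2)[OF pm])

lemma inf_le: "a \<in> S \<Longrightarrow> B \<subseteq> S \<Longrightarrow> b \<in> B \<Longrightarrow> (INF b\<in>B. d a b) \<le> d a b"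
  by (rule cINF_lower[OF bb]) auto

lemma inf_nonneg: "a \<in> S \<Longrightarrow> B \<subseteq> S \<Longrightarrow> B \<noteq> {} \<Longrightarrow> 0 \<le> (INF b\<in>B. d a b)"
  by (rule cINF_greatest) (auto intro: pm_D(2)[OF pm])

lemma ba: assumes "bnd S d" "A \<subseteq> S" "B \<subseteq> S" "B \<noteq> {}"
  shows "bdd_above ((\<lambda>a. INF b\<in>B. d a b) ` A)"
proof -
  obtain c where c: "\<forall>x\<in>S. \<forall>y\<in>S. d x y \<le> c" using assms(1) unfolding bnd_def by blast
  obtain b0 where "b0 \<in> B" using assms by blast
  show ?thesis
  proof (rule bdd_aboveI[where M=c])
    fix x assume "x \<in> (\<lambda>a. INF b\<in>B. d a b) ` A"
    then obtain a where a: "a \<in> A" "x = (INF b\<in>B. d a b)" by blast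
    have "x \<le> d a b0" using a inf_le[of a B b0] \<open>b0 \<in> B\<close> assms by auto
    also have "\<dots> \<le> c" using c a \<open>b0 \<in> B\<close> assms by auto
    finally show "x \<le> c" .
  qed
qed

lemma hdist_lt1: assumes "bnd S d" "A \<subseteq> S" "B \<subseteq> S" "B \<noteq> {}" "hdist d A B < r" "a \<in> A"
  shows "\<exists>b\<in>B. d a b < r"
proof -
  have "(INF b\<in>B. d a b) \<le> (SUP a\<in>A. INF b\<in>B. d a b)"
    by (rule cSUP_upper[OF assms(6) ba[OF assms(1-4)]])
  also have "\<dots> \<le> hdist d A B" unfolding hdist_def by simp
  finally have "(INF b\<in>B. d a b) < r" using assms(5) by simp
  then show ?thesis using cInf_lessD[of "(\<lambda>b. d a b) ` B" r] assms(4) by auto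
qed

lemma hdist_sym: assumes "A \<subseteq> S" "B \<subseteq> S" shows "hdist d A B = hdist d B A"
proof -
  have 1: "(SUP a\<in>A. INF b\<in>B. d a b) = (SUP a\<in>A. INF b\<in>B. d b a)"
    by (rule SUP_cong[OF refl], rule INF_cong[OF refl]) (use assms pm_D(3)[OF pm] in blast)
  have 2: "(SUP b\<in>B. INF a\<in>A. d a b) = (SUP b\<in>B. INF a\<in>A. d b a)"
    by (rule SUP_cong[OF refl], rule INF_cong[OF refl]) (use assms pm_D(3)[OF pm] in blast)
  show ?thesis unfolding hdist_def 1 2 by (simp add: max.commute)
qed

lemma hdist_lt2: assumes "bnd S d" "A \<subseteq> S" "B \<subseteq> S" "A \<noteq> {}" "hdist d A B < r" "b \<in> B"
  shows "\<exists>a\<in>A. d a b < r"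
proof -
  have "hdist d B A < r" using hdist_sym assms by simp
  from hdist_lt1[OF assms(1,3,2,4) this assms(6)] obtain a where "a \<in> A" "d b a < r" by blast
  moreover have "d a b = d b a" using pm_D(3)[OF pm, of a b] assms \<open>a \<in> A\<close> by blast
  ultimately show ?thesis by metis
qed

lemma hdist_le: assumes "A \<subseteq> S" "B \<subseteq> S" "A \<noteq> {}" "B \<noteq> {}"
  and 1: "\<And>a e. a \<in> A \<Longrightarrow> e > 0 \<Longrightarrow> \<exists>b\<in>B. d a b \<le> r + e"
  and 2: "\<And>b e. b \<in> B \<Longrightarrow> e > 0 \<Longrightarrow> \<exists>a\<in>A. d a b \<le> r + e"
  shows "hdist d A B \<le> r"
proof -
  have "(SUP a\<in>A. INF b\<in>B. d a b) \<le> r"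
  proof (rule cSUP_least[OF assms(3)])
    fix a assume a: "a \<in> A"
    show "(INF b\<in>B. d a b) \<le> r"
    proof (rule field_le_epsilon)
      fix e :: real assume "e > 0"
      then obtain b where "b \<in> B" "d a b \<le> r + e" using 1 a by blast
      then show "(INF b\<in>B. d a b) \<le> r + e" using inf_le[of a B b] a assms by force
    qed
  qed
  moreover have "(SUP b\<in>B. INF a\<in>A. d a b) \<le> r"
  proof (rule cSUP_least[OF assms(4)])
    fix b assume b: "b \<in> B"
    show "(INF a\<in>A. d a b) \<le> r"
    proof (rule field_le_epsilon)
      fix e :: real assume "e > 0"
      then obtain a where a: "a \<in> A" "d a b \<le> r + e" using 2 b by blast
      have "(INF a\<in>A. d a b) \<le> d a b"
        by (rule cINF_lower[OF _ a(1)], rule bdd_belowI[where m=0]) (use assms b pm_D(2)[OF pm] in blast)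
      then show "(INF a\<in>A. d a b) \<le> r + e" using a by linarith
    qed
  qed
  ultimately show ?thesis unfolding hdist_def by simp
qed

lemma hdist_nonneg: assumes "bnd S d" "A \<subseteq> S" "B \<subseteq> S" "A \<noteq> {}" "B \<noteq> {}"
  shows "0 \<le> hdist d A B"
proof -
  obtain a where a: "a \<in> A" using assms by blast
  have "0 \<le> (INF b\<in>B. d a b)" using inf_nonneg a assms by auto
  also have "(INF b\<in>B. d a b) \<le> (SUP a\<in>A. INF b\<in>B. d a b)"
    by (rule cSUP_upper[OF a ba[OF assms(1-3,5)]])
  also have "\<dots> \<le> hdist d A B" unfolding hdist_def by simp
  finally show ?thesis .
qed

lemma hdist_self: assumes "bnd S d" "A \<subseteq> S" "A \<noteq> {}" shows "hdist d A A = 0"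
proof -
  have "hdist d A A \<le> 0"
    by (rule hdist_le) (use assms pm_D(1)[OF pm] in force)+
  then show ?thesis using hdist_nonneg[OF assms(1,2,2,3,3)] by simp
qed

lemma hdist_tri: assumes "bnd S d" "A \<subseteq> S" "B \<subseteq> S" "C \<subseteq> S" "A \<noteq> {}" "B \<noteq> {}" "C \<noteq> {}"
  shows "hdist d A C \<le> hdist d A B + hdist d B C"
proof (rule hdist_le)
  fix a e assume a: "a \<in> A" and e: "(e::real) > 0"
  obtain b where b: "b \<in> B" "d a b < hdist d A B + e/2"
    using hdist_lt1[OF assms(1,2,3,6) _ a, of "hdist d A B + e/2"] e by auto
  obtain c where c: "c \<in> C" "d b c < hdist d B C + e/2"
    using hdist_lt1[OF assms(1,3,4,7) _ b(1), of "hdist d B C + e/2"] e by auto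
  have "d a c \<le> d a b + d b c" using pm_D(4)[OF pm, of a b c] a b c assms by blast
  then show "\<exists>c\<in>C. d a c \<le> hdist d A B + hdist d B C + e" using b c by force
next
  fix c e assume c: "c \<in> C" and e: "(e::real) > 0"
  obtain b where b: "b \<in> B" "d b c < hdist d B C + e/2"
    using hdist_lt2[OF assms(1,3,4,6) _ c, of "hdist d B C + e/2"] e by auto
  obtain a where a: "a \<in> A" "d a b < hdist d A B + e/2"
    using hdist_lt2[OF assms(1,2,3,5) _ b(1), of "hdist d A B + e/2"] e by auto
  have "d a c \<le> d a b + d b c" using pm_D(4)[OF pm, of a b c] a b c assms by blast
  then show "\<exists>a\<in>A. d a c \<le> hdist d A B + hdist d B C + e" using b a by force
qed (use assms in auto)

lemma hdist_bound: assumes "A \<subseteq> S" "B \<subseteq> S" "A \<noteq> {}" "B \<noteq> {}" "\<forall>x\<in>S. \<forall>y\<in>S. d x y \<le> c"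
  shows "hdist d A B \<le> c"
  by (rule hdist_le) (use assms in force)+

lemma hdist_pm: assumes "bnd S d" "\<H> \<subseteq> {A. A \<subseteq> S \<and> A \<noteq> {}}"
  shows "pm \<H> (hdist d)" "bnd \<H> (hdist d)"
proof -
  have s: "\<And>A. A \<in> \<H> \<Longrightarrow> A \<subseteq> S \<and> A \<noteq> {}" using assms(2) by blast
  show "pm \<H> (hdist d)" unfolding pm_def
  proof (intro conjI ballI)
    fix A B C assume "A \<in> \<H>" "B \<in> \<H>" "C \<in> \<H>"
    then show "hdist d A C \<le> hdist d A B + hdist d B C" using hdist_tri[OF assms(1)] s by meson
  next
    fix A B assume "A \<in> \<H>" "B \<in> \<H>"
    then show "0 \<le> hdist d A B" "hdist d A B = hdist d B A"
      using hdist_nonneg[OF assms(1)] hdist_sym s by meson+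
  next
    fix A assume "A \<in> \<H>" then show "hdist d A A = 0" using hdist_self[OF assms(1)] s by meson
  qed
  obtain c where "\<forall>x\<in>S. \<forall>y\<in>S. d x y \<le> c" using assms unfolding bnd_def by blast
  then show "bnd \<H> (hdist d)" unfolding bnd_def using hdist_bound assms by blast
qed

end



definition sp :: "'a set \<Rightarrow> ('a \<Rightarrow> 'a \<Rightarrow> real) \<Rightarrow> bool" where
  "sp X d \<longleftrightarrow> pm X d \<and> bnd X d \<and> X \<noteq> {}"

definition glue :: "('a \<Rightarrow> 'a \<Rightarrow> real) \<Rightarrow> ('b \<Rightarrow> 'b \<Rightarrow> real) \<Rightarrow> ('a \<Rightarrow> 'b \<Rightarrow> real)
   \<Rightarrow> 'a + 'b \<Rightarrow> 'a + 'b \<Rightarrow> real" where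
  "glue dX dY C u v = (case u of Inl x \<Rightarrow> (case v of Inl x' \<Rightarrow> dX x x' | Inr y \<Rightarrow> C x y)
     | Inr y \<Rightarrow> (case v of Inl x \<Rightarrow> C x y | Inr y' \<Rightarrow> dY y y'))"

lemma glue_simps[simp]: "glue dX dY C (Inl x) (Inl x') = dX x x'"
  "glue dX dY C (Inr y) (Inr y') = dY y y'"
  "glue dX dY C (Inl x) (Inr y) = C x y" "glue dX dY C (Inr y) (Inl x) = C x y"
  by (simp_all add: glue_def)

lemma adm_glue:
  assumes "pm X dX" "pm Y dY"
  and c0: "\<And>x y. x \<in> X \<Longrightarrow> y \<in> Y \<Longrightarrow> 0 \<le> C x y"
  and a: "\<And>x x' y. x \<in> X \<Longrightarrow> x' \<in> X \<Longrightarrow> y \<in> Y \<Longrightarrow> C x y \<le> dX x x' + C x' y"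
  and b: "\<And>x y y'. x \<in> X \<Longrightarrow> y \<in> Y \<Longrightarrow> y' \<in> Y \<Longrightarrow> C x y \<le> C x y' + dY y' y"
  and c: "\<And>x x' y. x \<in> X \<Longrightarrow> x' \<in> X \<Longrightarrow> y \<in> Y \<Longrightarrow> dX x x' \<le> C x y + C x' y"
  and d: "\<And>x y y'. x \<in> X \<Longrightarrow> y \<in> Y \<Longrightarrow> y' \<in> Y \<Longrightarrow> dY y y' \<le> C x y + C x y'"
  shows "admissible X dX Y dY (glue dX dY C)"
proof -
  note X = pm_D[OF assms(1)] and Y = pm_D[OF assms(2)]
  have tri: "glue dX dY C u w \<le> glue dX dY C u v + glue dX dY C v w"
    if "u \<in> Inl ` X \<union> Inr ` Y" "v \<in> Inl ` X \<union> Inr ` Y" "w \<in> Inl ` X \<union> Inr ` Y" for u v w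
  proof -
    { fix x x' y assume "x \<in> X" "x' \<in> X" "y \<in> Y"
      then have "C x' y \<le> C x y + dX x x'" using a[of x' x y] X(3)[of x x'] by simp }
    note a' = this
    { fix x y y' assume "x \<in> X" "y \<in> Y" "y' \<in> Y"
      then have "C x y \<le> dY y y' + C x y'" using b[of x y y'] Y(3)[of y y'] by simp }
    note b' = this
    show ?thesis
    proof (cases u)
      case (Inl x)
      then have x: "x \<in> X" using that(1) by auto
      show ?thesis
      proof (cases v)
        case (Inl x')
        then have x': "x' \<in> X" using that(2) by auto
        show ?thesis
        proof (cases w)
          case (Inl x'')
          then have "x'' \<in> X" using that(3) by auto
          then show ?thesis using \<open>u = Inl x\<close> \<open>v = Inl x'\<close> Inl X(4) x x' by simp
        next
          case (Inr y)
          then have "y \<in> Y" using that(3) by auto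
          then show ?thesis using \<open>u = Inl x\<close> \<open>v = Inl x'\<close> Inr a x x' by simp
        qed
      next
        case (Inr y)
        then have y: "y \<in> Y" using that(2) by auto
        show ?thesis
        proof (cases w)
          case (Inl x'')
          then have "x'' \<in> X" using that(3) by auto
          then show ?thesis using \<open>u = Inl x\<close> \<open>v = Inr y\<close> Inl c x y by simp
        next
          case (Inr y')
          then have "y' \<in> Y" using that(3) by auto
          then show ?thesis using \<open>u = Inl x\<close> \<open>v = Inr y\<close> Inr b x y by simp
        qed
      qed
    next
      case (Inr y)
      then have y: "y \<in> Y" using that(1) by auto
      show ?thesis
      proof (cases v)
        case (Inl x')
        then have x': "x' \<in> X" using that(2) by auto
        show ?thesis
        proof (cases w)
          case (Inl x'')
          then have "x'' \<in> X" using that(3) by auto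
          then show ?thesis using \<open>u = Inr y\<close> \<open>v = Inl x'\<close> Inl a' x' y by simp
        next
          case (Inr y')
          then have "y' \<in> Y" using that(3) by auto
          then show ?thesis using \<open>u = Inr y\<close> \<open>v = Inl x'\<close> Inr d x' y by simp
        qed
      next
        case (Inr y')
        then have y': "y' \<in> Y" using that(2) by auto
        show ?thesis
        proof (cases w)
          case (Inl x'')
          then have "x'' \<in> X" using that(3) by auto
          then show ?thesis using \<open>u = Inr y\<close> \<open>v = Inr y'\<close> Inl b' y y' by simp
        next
          case (Inr y'')
          then have "y'' \<in> Y" using that(3) by auto
          then show ?thesis using \<open>u = Inr y\<close> \<open>v = Inr y'\<close> Inr Y(4) y y' by simp
        qed
      qed
    qed
  qed
  have sym: "glue dX dY C u v = glue dX dY C v u" if "u \<in> Inl ` X \<union> Inr ` Y" "v \<in> Inl ` X \<union> Inr ` Y" for u v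
    using that X(3) Y(3) by auto
  have nn: "0 \<le> glue dX dY C u v" if "u \<in> Inl ` X \<union> Inr ` Y" "v \<in> Inl ` X \<union> Inr ` Y" for u v
    using that X(2) Y(2) c0 by auto
  have zz: "glue dX dY C u u = 0" if "u \<in> Inl ` X \<union> Inr ` Y" for u
    using that X(1) Y(1) by auto
  show ?thesis unfolding admissible_def
    using sym nn zz tri by simp
qed

lemma adm_pm: "admissible X dX Y dY D \<Longrightarrow> pm (Inl ` X \<union> Inr ` Y) D"
  unfolding admissible_def pm_def by (elim conjE, intro conjI) assumption+

lemma adm_eq: "admissible X dX Y dY D \<Longrightarrow> x \<in> X \<Longrightarrow> x' \<in> X \<Longrightarrow> D (Inl x) (Inl x') = dX x x'"
  "admissible X dX Y dY D \<Longrightarrow> y \<in> Y \<Longrightarrow> y' \<in> Y \<Longrightarrow> D (Inr y) (Inr y') = dY y y'"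
  by (simp_all add: admissible_def)

lemma adm_bnd: assumes "sp X dX" "sp Y dY" "admissible X dX Y dY D"
  shows "bnd (Inl ` X \<union> Inr ` Y) D"
proof -
  let ?U = "Inl ` X \<union> Inr ` Y"
  note P = pm_D[OF adm_pm[OF assms(3)]]
  obtain cx where cx: "\<forall>x\<in>X. \<forall>y\<in>X. dX x y \<le> cx" using assms(1) unfolding sp_def bnd_def by blast
  obtain cy where cy: "\<forall>x\<in>Y. \<forall>y\<in>Y. dY x y \<le> cy" using assms(2) unfolding sp_def bnd_def by blast
  obtain x0 y0 where x0: "x0 \<in> X" and y0: "y0 \<in> Y" using assms unfolding sp_def by blast
  define K where "K = cx + cy + D (Inr y0) (Inl x0)"
  have cx0: "cx \<ge> 0" using cx x0 pm_D(1)[of X dX x0] assms(1) unfolding sp_def by force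
  have cy0: "cy \<ge> 0" using cy y0 pm_D(1)[of Y dY y0] assms(2) unfolding sp_def by force
  have D0: "D (Inr y0) (Inl x0) \<ge> 0" using P(2) x0 y0 by blast
  have k: "D u (Inl x0) \<le> K" if "u \<in> ?U" for u
  proof (cases u)
    case (Inl x)
    then have x: "x \<in> X" using that by auto
    have "D u (Inl x0) = dX x x0" using adm_eq(1)[OF assms(3) x x0] Inl by simp
    also have "\<dots> \<le> cx" using cx x x0 by blast
    finally show ?thesis unfolding K_def using cy0 D0 by linarith
  next
    case (Inr y)
    then have y: "y \<in> Y" using that by auto
    have "D (Inr y) (Inl x0) \<le> D (Inr y) (Inr y0) + D (Inr y0) (Inl x0)"
      using P(4)[of "Inr y" "Inr y0" "Inl x0"] x0 y y0 by blast
    also have "D (Inr y) (Inr y0) = dY y y0" using adm_eq(2)[OF assms(3) y y0] .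
    also have "dY y y0 \<le> cy" using cy y y0 by blast
    finally show ?thesis unfolding K_def Inr using cx0 by linarith
  qed
  show ?thesis unfolding bnd_def
  proof (intro exI[of _ "2*K"] ballI)
    fix u v assume "u \<in> ?U" "v \<in> ?U"
    moreover have x0U: "Inl x0 \<in> ?U" using x0 by blast
    ultimately have "D u v \<le> D u (Inl x0) + D (Inl x0) v" using P(4) by blast
    also have "D (Inl x0) v = D v (Inl x0)" using P(3) x0U \<open>v \<in> ?U\<close> by blast
    finally show "D u v \<le> 2*K" using k[OF \<open>u \<in> ?U\<close>] k[OF \<open>v \<in> ?U\<close>] by linarith
  qed
qed

lemma adm_exists: assumes "sp X dX" "sp Y dY" shows "\<exists>D. admissible X dX Y dY D"
proof -
  obtain cx where cx: "\<forall>x\<in>X. \<forall>y\<in>X. dX x y \<le> cx" using assms(1) unfolding sp_def bnd_def by blast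
  obtain cy where cy: "\<forall>x\<in>Y. \<forall>y\<in>Y. dY x y \<le> cy" using assms(2) unfolding sp_def bnd_def by blast
  obtain x0 y0 where x0: "x0 \<in> X" and y0: "y0 \<in> Y" using assms unfolding sp_def by blast
  have "cx \<ge> 0" using cx x0 pm_D(1)[of X dX x0] assms(1) unfolding sp_def by force
  have "cy \<ge> 0" using cy y0 pm_D(1)[of Y dY y0] assms(2) unfolding sp_def by force
  have pX: "pm X dX" and pY: "pm Y dY" using assms unfolding sp_def by auto
  show ?thesis
  proof (rule exI, rule adm_glue[OF pX pY, where C="\<lambda>_ _. cx + cy"])
    fix x x' y assume "x \<in> X" "x' \<in> X" "y \<in> Y"
    then show "cx + cy \<le> dX x x' + (cx + cy)" "dX x x' \<le> cx + cy + (cx + cy)"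
      using cx \<open>cx \<ge> 0\<close> \<open>cy \<ge> 0\<close> pm_D(2)[OF pX, of x x'] by (simp, smt (verit))
  next
    fix x y y' assume "x \<in> X" "y \<in> Y" "y' \<in> Y"
    then show "cx + cy \<le> cx + cy + dY y' y" "dY y y' \<le> cx + cy + (cx + cy)"
      using cy \<open>cx \<ge> 0\<close> \<open>cy \<ge> 0\<close> pm_D(2)[OF pY, of y' y] by (simp, smt (verit))
  qed (use \<open>cx \<ge> 0\<close> \<open>cy \<ge> 0\<close> in simp)
qed

lemma hd_adm: "admissible X dX Y dY D \<Longrightarrow> hd (Inl ` X \<union> Inr ` Y) D"
  by (rule hd.intro, rule adm_pm)

lemma gh_set_bdd: assumes "sp X dX" "sp Y dY"
  shows "bdd_below {hdist D (Inl ` X) (Inr ` Y) | D. admissible X dX Y dY D}"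
proof (rule bdd_belowI[where m=0])
  fix v assume "v \<in> {hdist D (Inl ` X) (Inr ` Y) | D. admissible X dX Y dY D}"
  then obtain D where D: "admissible X dX Y dY D" "v = hdist D (Inl ` X) (Inr ` Y)" by blast
  show "0 \<le> v" unfolding D(2)
    by (rule hd.hdist_nonneg[OF hd_adm[OF D(1)] adm_bnd[OF assms D(1)]]) (use assms in \<open>auto simp: sp_def\<close>)
qed

lemma gh_le: assumes "sp X dX" "sp Y dY" "admissible X dX Y dY D" "hdist D (Inl ` X) (Inr ` Y) \<le> r"
  shows "gh_dist X dX Y dY \<le> r"
  unfolding gh_dist_def
  by (rule cInf_lower2[OF _ assms(4) gh_set_bdd[OF assms(1,2)]]) (use assms(3) in blast)

lemma gh_lt: assumes "sp X dX" "sp Y dY" "gh_dist X dX Y dY < r"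
  shows "\<exists>D. admissible X dX Y dY D \<and> hdist D (Inl ` X) (Inr ` Y) < r"
proof -
  have "{hdist D (Inl ` X) (Inr ` Y) | D. admissible X dX Y dY D} \<noteq> {}"
    using adm_exists[OF assms(1,2)] by blast
  from cInf_lessD[OF this assms(3)[unfolded gh_dist_def]] show ?thesis by blast
qed

lemma gh_nonneg: assumes "sp X dX" "sp Y dY" shows "0 \<le> gh_dist X dX Y dY"
  unfolding gh_dist_def
proof (rule cInf_greatest)
  show "{hdist D (Inl ` X) (Inr ` Y) | D. admissible X dX Y dY D} \<noteq> {}"
    using adm_exists[OF assms(1,2)] by blast
  fix v assume "v \<in> {hdist D (Inl ` X) (Inr ` Y) | D. admissible X dX Y dY D}"
  then obtain D where D: "admissible X dX Y dY D" "v = hdist D (Inl ` X) (Inr ` Y)" by blast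
  show "0 \<le> v" unfolding D(2)
    by (rule hd.hdist_nonneg[OF hd_adm[OF D(1)] adm_bnd[OF assms D(1)]]) (use assms in \<open>auto simp: sp_def\<close>)
qed



lemma adm_facts: assumes D: "admissible X dX Y dY D" and pX: "pm X dX" and pY: "pm Y dY"
  shows "\<And>x y. x \<in> X \<Longrightarrow> y \<in> Y \<Longrightarrow> 0 \<le> D (Inl x) (Inr y)"
   "\<And>x y. x \<in> X \<Longrightarrow> y \<in> Y \<Longrightarrow> D (Inr y) (Inl x) = D (Inl x) (Inr y)"
   "\<And>x x' y. x \<in> X \<Longrightarrow> x' \<in> X \<Longrightarrow> y \<in> Y \<Longrightarrow> D (Inl x) (Inr y) \<le> dX x x' + D (Inl x') (Inr y)"
   "\<And>x y y'. x \<in> X \<Longrightarrow> y \<in> Y \<Longrightarrow> y' \<in> Y \<Longrightarrow> D (Inl x) (Inr y) \<le> D (Inl x) (Inr y') + dY y' y"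
   "\<And>x x' y. x \<in> X \<Longrightarrow> x' \<in> X \<Longrightarrow> y \<in> Y \<Longrightarrow> dX x x' \<le> D (Inl x) (Inr y) + D (Inl x') (Inr y)"
   "\<And>x y y'. x \<in> X \<Longrightarrow> y \<in> Y \<Longrightarrow> y' \<in> Y \<Longrightarrow> dY y y' \<le> D (Inl x) (Inr y) + D (Inl x) (Inr y')"
   "\<And>x x' y y'. x \<in> X \<Longrightarrow> x' \<in> X \<Longrightarrow> y \<in> Y \<Longrightarrow> y' \<in> Y \<Longrightarrow> dX x x' \<le> D (Inl x) (Inr y) + dY y y' + D (Inl x') (Inr y')"
   "\<And>x x' y y'. x \<in> X \<Longrightarrow> x' \<in> X \<Longrightarrow> y \<in> Y \<Longrightarrow> y' \<in> Y \<Longrightarrow> dY y y' \<le> D (Inl x) (Inr y) + dX x x' + D (Inl x') (Inr y')"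
proof -
  let ?U = "Inl ` X \<union> Inr ` Y"
  note P = pm_D[OF adm_pm[OF D]]
  have L: "x \<in> X \<Longrightarrow> Inl x \<in> ?U" for x by blast
  have R: "y \<in> Y \<Longrightarrow> Inr y \<in> ?U" for y by blast
  note E1 = adm_eq(1)[OF D] and E2 = adm_eq(2)[OF D]
  show "\<And>x y. x \<in> X \<Longrightarrow> y \<in> Y \<Longrightarrow> 0 \<le> D (Inl x) (Inr y)" using P(2) L R by blast
  show sy: "\<And>x y. x \<in> X \<Longrightarrow> y \<in> Y \<Longrightarrow> D (Inr y) (Inl x) = D (Inl x) (Inr y)" using P(3) L R by metis
  show "\<And>x x' y. x \<in> X \<Longrightarrow> x' \<in> X \<Longrightarrow> y \<in> Y \<Longrightarrow> D (Inl x) (Inr y) \<le> dX x x' + D (Inl x') (Inr y)"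
    using P(4) L R E1 by metis
  show "\<And>x y y'. x \<in> X \<Longrightarrow> y \<in> Y \<Longrightarrow> y' \<in> Y \<Longrightarrow> D (Inl x) (Inr y) \<le> D (Inl x) (Inr y') + dY y' y"
    using P(4) L R E2 by metis
  show "\<And>x x' y. x \<in> X \<Longrightarrow> x' \<in> X \<Longrightarrow> y \<in> Y \<Longrightarrow> dX x x' \<le> D (Inl x) (Inr y) + D (Inl x') (Inr y)"
  proof -
    fix x x' y assume a: "x \<in> X" "x' \<in> X" "y \<in> Y"
    have "D (Inl x) (Inl x') \<le> D (Inl x) (Inr y) + D (Inr y) (Inl x')" using P(4) L R a by metis
    then show "dX x x' \<le> D (Inl x) (Inr y) + D (Inl x') (Inr y)" using E1 sy a by metis
  qed
  show "\<And>x y y'. x \<in> X \<Longrightarrow> y \<in> Y \<Longrightarrow> y' \<in> Y \<Longrightarrow> dY y y' \<le> D (Inl x) (Inr y) + D (Inl x) (Inr y')"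
  proof -
    fix x y y' assume a: "x \<in> X" "y \<in> Y" "y' \<in> Y"
    have "D (Inr y) (Inr y') \<le> D (Inr y) (Inl x) + D (Inl x) (Inr y')" using P(4) L R a by metis
    then show "dY y y' \<le> D (Inl x) (Inr y) + D (Inl x) (Inr y')" using E2 sy a by metis
  qed
  show "\<And>x x' y y'. x \<in> X \<Longrightarrow> x' \<in> X \<Longrightarrow> y \<in> Y \<Longrightarrow> y' \<in> Y \<Longrightarrow> dX x x' \<le> D (Inl x) (Inr y) + dY y y' + D (Inl x') (Inr y')"
  proof -
    fix x x' y y' assume a: "x \<in> X" "x' \<in> X" "y \<in> Y" "y' \<in> Y"
    have "D (Inl x) (Inl x') \<le> D (Inl x) (Inr y) + D (Inr y) (Inl x')" using P(4) L R a by metis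
    moreover have "D (Inr y) (Inl x') \<le> D (Inr y) (Inr y') + D (Inr y') (Inl x')" using P(4) L R a by metis
    ultimately show "dX x x' \<le> D (Inl x) (Inr y) + dY y y' + D (Inl x') (Inr y')"
      using E1[OF a(1,2)] E2[OF a(3,4)] sy[OF a(2,4)] by linarith
  qed
  show "\<And>x x' y y'. x \<in> X \<Longrightarrow> x' \<in> X \<Longrightarrow> y \<in> Y \<Longrightarrow> y' \<in> Y \<Longrightarrow> dY y y' \<le> D (Inl x) (Inr y) + dX x x' + D (Inl x') (Inr y')"
  proof -
    fix x x' y y' assume a: "x \<in> X" "x' \<in> X" "y \<in> Y" "y' \<in> Y"
    have "D (Inr y) (Inr y') \<le> D (Inr y) (Inl x) + D (Inl x) (Inr y')" using P(4) L R a by metis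
    moreover have "D (Inl x) (Inr y') \<le> D (Inl x) (Inl x') + D (Inl x') (Inr y')" using P(4) L R a by metis
    ultimately show "dY y y' \<le> D (Inl x) (Inr y) + dX x x' + D (Inl x') (Inr y')"
      using E1[OF a(1,2)] E2[OF a(3,4)] sy[OF a(1,3)] by linarith
  qed
qed

lemma adm_hd: assumes "sp X dX" "sp Y dY" "admissible X dX Y dY D"
  "hdist D (Inl ` X) (Inr ` Y) < r"
  shows "\<And>x. x \<in> X \<Longrightarrow> \<exists>y\<in>Y. D (Inl x) (Inr y) < r"
    "\<And>y. y \<in> Y \<Longrightarrow> \<exists>x\<in>X. D (Inl x) (Inr y) < r"
proof -
  note H = hd_adm[OF assms(3)] and B = adm_bnd[OF assms(1-3)]
  have ne: "Inl ` X \<noteq> {}" "Inr ` Y \<noteq> {}" using assms(1,2) unfolding sp_def by auto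
  show "\<exists>y\<in>Y. D (Inl x) (Inr y) < r" if "x \<in> X" for x
    using hd.hdist_lt1[OF H B _ _ ne(2) assms(4), of "Inl x"] that by blast
  show "\<exists>x\<in>X. D (Inl x) (Inr y) < r" if "y \<in> Y" for y
    using hd.hdist_lt2[OF H B _ _ ne(1) assms(4), of "Inr y"] that by blast
qed

lemma adm_hdist_le: assumes "sp X dX" "sp Y dY" "admissible X dX Y dY D"
  "\<And>x. x \<in> X \<Longrightarrow> \<exists>y\<in>Y. D (Inl x) (Inr y) \<le> r"
  "\<And>y. y \<in> Y \<Longrightarrow> \<exists>x\<in>X. D (Inl x) (Inr y) \<le> r"
  shows "hdist D (Inl ` X) (Inr ` Y) \<le> r"
proof -
  note H = hd_adm[OF assms(3)]
  have ne: "Inl ` X \<noteq> {}" "Inr ` Y \<noteq> {}" using assms(1,2) unfolding sp_def by auto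
  show ?thesis
  proof (rule hd.hdist_le[OF H _ _ ne])
    fix a :: "'a + 'b" and e :: real assume "a \<in> Inl ` X" "e > 0"
    then obtain x where x: "x \<in> X" "a = Inl x" by blast
    then obtain y where "y \<in> Y" "D (Inl x) (Inr y) \<le> r" using assms(4) by blast
    then show "\<exists>b\<in>Inr ` Y. D a b \<le> r + e" using x \<open>e > 0\<close> by (intro bexI[of _ "Inr y"]) auto
  next
    fix b :: "'a + 'b" and e :: real assume "b \<in> Inr ` Y" "e > 0"
    then obtain y where y: "y \<in> Y" "b = Inr y" by blast
    then obtain x where "x \<in> X" "D (Inl x) (Inr y) \<le> r" using assms(5) by blast
    then show "\<exists>a\<in>Inl ` X. D a b \<le> r + e" using y \<open>e > 0\<close> by (intro bexI[of _ "Inl x"]) auto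
  qed auto
qed

lemma gh_sym: assumes X: "sp X dX" and Y: "sp Y dY" shows "gh_dist Y dY X dX \<le> gh_dist X dX Y dY"
proof (rule field_le_epsilon)
  fix e :: real assume e: "e > 0"
  obtain D where D: "admissible X dX Y dY D" "hdist D (Inl ` X) (Inr ` Y) < gh_dist X dX Y dY + e"
    using gh_lt[OF X Y, of "gh_dist X dX Y dY + e"] e by auto
  have pX: "pm X dX" and pY: "pm Y dY" using X Y unfolding sp_def by auto
  note F = adm_facts[OF D(1) pX pY]
  define D' where "D' = glue dY dX (\<lambda>y x. D (Inl x) (Inr y))"
  have A: "admissible Y dY X dX D'" unfolding D'_def
  proof (rule adm_glue[OF pY pX])
    fix y y' x assume a: "y \<in> Y" "y' \<in> Y" "x \<in> X"
    show "D (Inl x) (Inr y) \<le> dY y y' + D (Inl x) (Inr y')" using F(4)[of x y y'] pm_D(3)[OF pY, of y y'] a by simp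
    show "dY y y' \<le> D (Inl x) (Inr y) + D (Inl x) (Inr y')" using F(6) a by simp
  next
    fix y x x' assume a: "y \<in> Y" "x \<in> X" "x' \<in> X"
    show "D (Inl x) (Inr y) \<le> D (Inl x') (Inr y) + dX x' x" using F(3)[of x x' y] pm_D(3)[OF pX, of x x'] a by simp
    show "dX x x' \<le> D (Inl x) (Inr y) + D (Inl x') (Inr y)" using F(5) a by simp
  qed (use F(1) in simp)
  have "hdist D' (Inl ` Y) (Inr ` X) \<le> gh_dist X dX Y dY + e"
  proof (rule adm_hdist_le[OF Y X A])
    fix y assume "y \<in> Y"
    then obtain x where "x \<in> X" "D (Inl x) (Inr y) < gh_dist X dX Y dY + e" using adm_hd(2)[OF X Y D] by blast
    then show "\<exists>x\<in>X. D' (Inl y) (Inr x) \<le> gh_dist X dX Y dY + e" unfolding D'_def by force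
  next
    fix x assume "x \<in> X"
    then obtain y where "y \<in> Y" "D (Inl x) (Inr y) < gh_dist X dX Y dY + e" using adm_hd(1)[OF X Y D] by blast
    then show "\<exists>y\<in>Y. D' (Inl y) (Inr x) \<le> gh_dist X dX Y dY + e" unfolding D'_def by force
  qed
  then show "gh_dist Y dY X dX \<le> gh_dist X dX Y dY + e" using gh_le[OF Y X A] by blast
qed

lemma gh_sym_eq: "sp X dX \<Longrightarrow> sp Y dY \<Longrightarrow> gh_dist Y dY X dX = gh_dist X dX Y dY"
  using gh_sym by (metis order_antisym)

lemma gh_tri: assumes X: "sp X dX" and Y: "sp Y dY" and Z: "sp Z dZ"
  shows "gh_dist X dX Z dZ \<le> gh_dist X dX Y dY + gh_dist Y dY Z dZ"
proof (rule field_le_epsilon)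
  fix e :: real assume e: "e > 0"
  define r1 where "r1 = gh_dist X dX Y dY + e/2"
  define r2 where "r2 = gh_dist Y dY Z dZ + e/2"
  obtain D1 where D1: "admissible X dX Y dY D1" "hdist D1 (Inl ` X) (Inr ` Y) < r1"
    using gh_lt[OF X Y, of r1] e unfolding r1_def by auto
  obtain D2 where D2: "admissible Y dY Z dZ D2" "hdist D2 (Inl ` Y) (Inr ` Z) < r2"
    using gh_lt[OF Y Z, of r2] e unfolding r2_def by auto
  have pX: "pm X dX" and pY: "pm Y dY" and pZ: "pm Z dZ" and Yne: "Y \<noteq> {}"
    using X Y Z unfolding sp_def by auto
  note F1 = adm_facts[OF D1(1) pX pY] and F2 = adm_facts[OF D2(1) pY pZ]
  define C where "C x z = (INF y\<in>Y. D1 (Inl x) (Inr y) + D2 (Inl y) (Inr z))" for x z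
  have bb: "bdd_below ((\<lambda>y. D1 (Inl x) (Inr y) + D2 (Inl y) (Inr z)) ` Y)" if "x \<in> X" "z \<in> Z" for x z
    by (rule bdd_belowI[where m=0]) (use F1(1) F2(1) that in force)
  have Cle: "C x z \<le> D1 (Inl x) (Inr y) + D2 (Inl y) (Inr z)" if "x \<in> X" "z \<in> Z" "y \<in> Y" for x y z
    unfolding C_def by (rule cINF_lower[OF bb[OF that(1,2)] that(3)])
  have Cge: "c \<le> C x z" if "\<And>y. y \<in> Y \<Longrightarrow> c \<le> D1 (Inl x) (Inr y) + D2 (Inl y) (Inr z)" for x z c
    unfolding C_def by (rule cINF_greatest[OF Yne]) (use that in auto)
  define D where "D = glue dX dZ C"
  have A: "admissible X dX Z dZ D" unfolding D_def
  proof (rule adm_glue[OF pX pZ])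
    fix x z assume "x \<in> X" "z \<in> Z"
    then show "0 \<le> C x z" using F1(1) F2(1) by (intro Cge) (simp add: add_nonneg_nonneg)
  next
    fix x x' z assume a: "x \<in> X" "x' \<in> X" "z \<in> Z"
    have "C x z - dX x x' \<le> C x' z"
    proof (rule Cge)
      fix y assume "y \<in> Y"
      then show "C x z - dX x x' \<le> D1 (Inl x') (Inr y) + D2 (Inl y) (Inr z)"
        using Cle[OF a(1,3)] F1(3)[OF a(1,2)] by (smt (verit))
    qed
    then show "C x z \<le> dX x x' + C x' z" by simp
    have "dX x x' - C x' z \<le> C x z"
    proof (rule Cge)
      fix y assume y: "y \<in> Y"
      have "dX x x' - (D1 (Inl x) (Inr y) + D2 (Inl y) (Inr z)) \<le> C x' z"
      proof (rule Cge)
        fix y' assume y': "y' \<in> Y"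
        show "dX x x' - (D1 (Inl x) (Inr y) + D2 (Inl y) (Inr z)) \<le> D1 (Inl x') (Inr y') + D2 (Inl y') (Inr z)"
          using F1(7)[OF a(1,2) y y'] F2(5)[OF y y' a(3)] by linarith
      qed
      then show "dX x x' - C x' z \<le> D1 (Inl x) (Inr y) + D2 (Inl y) (Inr z)" by linarith
    qed
    then show "dX x x' \<le> C x z + C x' z" by simp
  next
    fix x z z' assume a: "x \<in> X" "z \<in> Z" "z' \<in> Z"
    have "C x z - dZ z' z \<le> C x z'"
    proof (rule Cge)
      fix y assume "y \<in> Y"
      then show "C x z - dZ z' z \<le> D1 (Inl x) (Inr y) + D2 (Inl y) (Inr z')"
        using Cle[OF a(1,2)] F2(4)[OF _ a(2,3)] by (smt (verit))
    qed
    then show "C x z \<le> C x z' + dZ z' z" by simp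
    have "dZ z z' - C x z' \<le> C x z"
    proof (rule Cge)
      fix y assume y: "y \<in> Y"
      have "dZ z z' - (D1 (Inl x) (Inr y) + D2 (Inl y) (Inr z)) \<le> C x z'"
      proof (rule Cge)
        fix y' assume y': "y' \<in> Y"
        show "dZ z z' - (D1 (Inl x) (Inr y) + D2 (Inl y) (Inr z)) \<le> D1 (Inl x) (Inr y') + D2 (Inl y') (Inr z')"
          using F2(8)[OF y y' a(2,3)] F1(6)[OF a(1) y y'] by linarith
      qed
      then show "dZ z z' - C x z' \<le> D1 (Inl x) (Inr y) + D2 (Inl y) (Inr z)" by linarith
    qed
    then show "dZ z z' \<le> C x z + C x z'" by simp
  qed
  have "hdist D (Inl ` X) (Inr ` Z) \<le> r1 + r2"
  proof (rule adm_hdist_le[OF X Z A])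
    fix x assume x: "x \<in> X"
    obtain y where y: "y \<in> Y" "D1 (Inl x) (Inr y) < r1" using adm_hd(1)[OF X Y D1 x] by blast
    obtain z where z: "z \<in> Z" "D2 (Inl y) (Inr z) < r2" using adm_hd(1)[OF Y Z D2 y(1)] by blast
    show "\<exists>z\<in>Z. D (Inl x) (Inr z) \<le> r1 + r2"
      using Cle[OF x z(1) y(1)] y z unfolding D_def by force
  next
    fix z assume z: "z \<in> Z"
    obtain y where y: "y \<in> Y" "D2 (Inl y) (Inr z) < r2" using adm_hd(2)[OF Y Z D2 z] by blast
    obtain x where x: "x \<in> X" "D1 (Inl x) (Inr y) < r1" using adm_hd(2)[OF X Y D1 y(1)] by blast
    show "\<exists>x\<in>X. D (Inl x) (Inr z) \<le> r1 + r2"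
      using Cle[OF x(1) z y(1)] y x unfolding D_def by force
  qed
  from gh_le[OF X Z A this] show "gh_dist X dX Z dZ \<le> gh_dist X dX Y dY + gh_dist Y dY Z dZ + e" unfolding r1_def r2_def by linarith
qed



lemma ms_pm: assumes "Metric_space M d" shows "pm M d"
  unfolding pm_def
proof (intro conjI ballI)
  fix x y z assume "x \<in> M" "y \<in> M" "z \<in> M"
  then show "d x z \<le> d x y + d y z" by (rule Metric_space.triangle[OF assms])
next
  fix x y assume "x \<in> M" "y \<in> M"
  show "0 \<le> d x y" by (rule Metric_space.nonneg[OF assms])
  show "d x y = d y x" by (rule Metric_space.commute[OF assms])
next
  fix x assume "x \<in> M" then show "d x x = 0" using Metric_space.zero[OF assms, of x x] by simp
qed

lemma hyp_sub: "hyperspace X dX \<subseteq> {A. A \<subseteq> X \<and> A \<noteq> {}}"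
  unfolding hyperspace_def by blast

lemma hyp_top: "Metric_space X dX \<Longrightarrow> X \<noteq> {} \<Longrightarrow> X \<in> hyperspace X dX"
  unfolding hyperspace_def using closedin_topspace[of "Metric_space.mtopology X dX"]
  by (simp add: Metric_space.topspace_mtopology)

lemma hyp_sp: assumes "Metric_space X dX" "bnd X dX" "X \<noteq> {}"
  shows "sp (hyperspace X dX) (hdist dX)"
proof -
  interpret hd X dX by (rule hd.intro, rule ms_pm[OF assms(1)])
  show ?thesis unfolding sp_def using hdist_pm[OF assms(2) hyp_sub] hyp_top[OF assms(1,3)] by blast
qed

lemma closed_sub: assumes M: "Metric_space M d" and L: "\<And>y y'. y \<in> M \<Longrightarrow> y' \<in> M \<Longrightarrow> f y \<le> f y' + d y' y"
  shows "closedin (Metric_space.mtopology M d) {y\<in>M. f y \<le> c}"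
  unfolding Metric_space.closedin_metric[OF M]
proof (intro conjI allI impI)
  fix y assume y: "y \<in> M - {y \<in> M. f y \<le> c}"
  show "\<exists>r>0. disjnt {y \<in> M. f y \<le> c} (Metric_space.mball M d y r)"
  proof (intro exI conjI)
    show "f y - c > 0" using y by auto
    show "disjnt {y \<in> M. f y \<le> c} (Metric_space.mball M d y (f y - c))"
      unfolding disjnt_def
    proof (rule ccontr)
      assume "{y \<in> M. f y \<le> c} \<inter> Metric_space.mball M d y (f y - c) \<noteq> {}"
      then obtain y' where y': "y' \<in> M" "f y' \<le> c" "d y y' < f y - c"
        using Metric_space.in_mball[OF M] by blast
      have "f y \<le> f y' + d y' y" using L y y' by auto
      moreover have "d y' y = d y y'" using Metric_space.commute[OF M] by metis
      ultimately show False using y' by linarith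
    qed
  qed
qed auto

lemma hdist_image: "hdist d (f ` A) (f ` B) = hdist (\<lambda>a b. d (f a) (f b)) A B"
  unfolding hdist_def by (simp add: image_image)

lemma hdist_cong: assumes "\<And>a b. a \<in> A \<Longrightarrow> b \<in> B \<Longrightarrow> d a b = d' a b"
  shows "hdist d A B = hdist d' A B"
proof -
  have 1: "(SUP a\<in>A. INF b\<in>B. d a b) = (SUP a\<in>A. INF b\<in>B. d' a b)"
    by (rule SUP_cong[OF refl], rule INF_cong[OF refl]) (use assms in blast)
  have 2: "(SUP b\<in>B. INF a\<in>A. d a b) = (SUP b\<in>B. INF a\<in>A. d' a b)"
    by (rule SUP_cong[OF refl], rule INF_cong[OF refl]) (use assms in blast)
  show ?thesis unfolding hdist_def 1 2 ..
qed

lemma pm_comp: assumes "pm (f ` S) d" shows "pm S (\<lambda>u v. d (f u) (f v))"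
  unfolding pm_def
proof (intro conjI ballI)
  fix x y z assume "x \<in> S" "y \<in> S" "z \<in> S"
  then show "d (f x) (f z) \<le> d (f x) (f y) + d (f y) (f z)" by (intro pm_D(4)[OF assms] imageI)
next
  fix x y assume "x \<in> S" "y \<in> S"
  then show "0 \<le> d (f x) (f y)" by (intro pm_D(2)[OF assms] imageI)
  show "d (f x) (f y) = d (f y) (f x)" using \<open>x \<in> S\<close> \<open>y \<in> S\<close> by (intro pm_D(3)[OF assms] imageI)
next
  fix x assume "x \<in> S" then show "d (f x) (f x) = 0" by (intro pm_D(1)[OF assms] imageI)
qed

lemma adm_of_pm: assumes "pm (Inl ` X \<union> Inr ` Y) D"
  "\<And>x x'. x \<in> X \<Longrightarrow> x' \<in> X \<Longrightarrow> D (Inl x) (Inl x') = dX x x'"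
  "\<And>y y'. y \<in> Y \<Longrightarrow> y' \<in> Y \<Longrightarrow> D (Inr y) (Inr y') = dY y y'"
  shows "admissible X dX Y dY D"
proof -
  have "(\<forall>u\<in>Inl ` X \<union> Inr ` Y. D u u = 0) \<and>
     (\<forall>u\<in>Inl ` X \<union> Inr ` Y. \<forall>v\<in>Inl ` X \<union> Inr ` Y. 0 \<le> D u v \<and> D u v = D v u) \<and>
     (\<forall>u\<in>Inl ` X \<union> Inr ` Y. \<forall>v\<in>Inl ` X \<union> Inr ` Y. \<forall>w\<in>Inl ` X \<union> Inr ` Y.
        D u w \<le> D u v + D v w)" using assms(1) unfolding pm_def by assumption
  moreover have "\<forall>x\<in>X. \<forall>x'\<in>X. D (Inl x) (Inl x') = dX x x'" using assms(2) by blast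
  moreover have "\<forall>y\<in>Y. \<forall>y'\<in>Y. D (Inr y) (Inr y') = dY y y'" using assms(3) by blast
  ultimately show ?thesis unfolding admissible_def by (intro conjI) (elim conjE, assumption)+
qed

definition lift :: "'a set + 'b set \<Rightarrow> ('a + 'b) set" where
  "lift u = (case u of Inl A \<Rightarrow> Inl ` A | Inr B \<Rightarrow> Inr ` B)"

lemma lift_simps[simp]: "lift (Inl A) = Inl ` A" "lift (Inr B) = Inr ` B"
  by (simp_all add: lift_def)

lemma hyp_lip: assumes X: "Metric_space X dX" "bnd X dX" "X \<noteq> {}"
  and Y: "Metric_space Y dY" "bnd Y dY" "Y \<noteq> {}"
  shows "gh_dist (hyperspace X dX) (hdist dX) (hyperspace Y dY) (hdist dY) \<le> gh_dist X dX Y dY"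
proof (rule field_le_epsilon)
  fix e :: real assume e: "e > 0"
  have sX: "sp X dX" and sY: "sp Y dY" using X Y ms_pm unfolding sp_def by auto
  have pX: "pm X dX" and pY: "pm Y dY" using X Y ms_pm by auto
  define r where "r = gh_dist X dX Y dY + e"
  obtain D where D: "admissible X dX Y dY D" "hdist D (Inl ` X) (Inr ` Y) < r"
    using gh_lt[OF sX sY, of r] e unfolding r_def by auto
  note F = adm_facts[OF D(1) pX pY]
  let ?U = "Inl ` X \<union> Inr ` Y"
  let ?HX = "hyperspace X dX" and ?HY = "hyperspace Y dY"
  let ?V = "Inl ` ?HX \<union> Inr ` ?HY"
  interpret hD: hd ?U D by (rule hd_adm[OF D(1)])
  note bD = adm_bnd[OF sX sY D(1)]
  define D' where "D' u v = hdist D (lift u) (lift v)" for u v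
  have liftV: "lift ` ?V \<subseteq> {A. A \<subseteq> ?U \<and> A \<noteq> {}}"
  proof
    fix S assume "S \<in> lift ` ?V"
    then consider A where "A \<in> ?HX" "S = Inl ` A" | B where "B \<in> ?HY" "S = Inr ` B" by auto
    then show "S \<in> {A. A \<subseteq> ?U \<and> A \<noteq> {}}"
    proof cases
      case 1 then show ?thesis using hyp_sub[of X dX] by blast
    next
      case 2 then show ?thesis using hyp_sub[of Y dY] by blast
    qed
  qed
  have pmV: "pm ?V D'" unfolding D'_def
    by (rule pm_comp, rule hD.hdist_pm(1)[OF bD liftV])
  have A': "admissible ?HX (hdist dX) ?HY (hdist dY) D'"
  proof (rule adm_of_pm[OF pmV])
    fix A A' assume "A \<in> ?HX" "A' \<in> ?HX"
    then have s: "A \<subseteq> X" "A' \<subseteq> X" using hyp_sub by blast+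
    show "D' (Inl A) (Inl A') = hdist dX A A'"
      unfolding D'_def lift_simps hdist_image by (rule hdist_cong) (metis adm_eq(1)[OF D(1)] subsetD s)
  next
    fix A A' assume "A \<in> ?HY" "A' \<in> ?HY"
    then have s: "A \<subseteq> Y" "A' \<subseteq> Y" using hyp_sub by blast+
    show "D' (Inr A) (Inr A') = hdist dY A A'"
      unfolding D'_def lift_simps hdist_image by (rule hdist_cong) (metis adm_eq(2)[OF D(1)] subsetD s)
  qed
  have sHX: "sp ?HX (hdist dX)" and sHY: "sp ?HY (hdist dY)" using hyp_sp X Y by auto
  have "hdist D' (Inl ` ?HX) (Inr ` ?HY) \<le> r"
  proof (rule adm_hdist_le[OF sHX sHY A'])
    fix A assume A: "A \<in> ?HX"
    then have AX: "A \<subseteq> X" "A \<noteq> {}" using hyp_sub by blast+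
    define f where "f y = (INF a\<in>A. D (Inl a) (Inr y))" for y
    have bb: "bdd_below ((\<lambda>a. D (Inl a) (Inr y)) ` A)" if "y \<in> Y" for y
      by (rule bdd_belowI[where m=0]) (use F(1) AX that in blast)
    have fle: "f y \<le> D (Inl a) (Inr y)" if "y \<in> Y" "a \<in> A" for a y
      unfolding f_def by (rule cINF_lower[OF bb[OF that(1)] that(2)])
    define B where "B = {y \<in> Y. f y \<le> r}"
    have Bc: "closedin (Metric_space.mtopology Y dY) B" unfolding B_def
    proof (rule closed_sub[OF Y(1)])
      fix y y' assume yy: "y \<in> Y" "y' \<in> Y"
      have "f y - dY y' y \<le> f y'" unfolding f_def[of y']
      proof (rule cINF_greatest[OF AX(2)])
        fix a assume "a \<in> A"
        then have aX: "a \<in> X" using AX by blast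
        have "f y \<le> D (Inl a) (Inr y)" by (rule fle[OF yy(1) \<open>a \<in> A\<close>])
        moreover have "D (Inl a) (Inr y) \<le> D (Inl a) (Inr y') + dY y' y" by (rule F(4)[OF aX yy])
        ultimately show "f y - dY y' y \<le> D (Inl a) (Inr y')" by linarith
      qed
      then show "f y \<le> f y' + dY y' y" by simp
    qed
    have near: "\<exists>y\<in>B. D (Inl a) (Inr y) < r" if "a \<in> A" for a
    proof -
      have aX: "a \<in> X" using that AX(1) by blast
      obtain y where y: "y \<in> Y" "D (Inl a) (Inr y) < r" using adm_hd(1)[OF sX sY D(1) D(2) aX] by blast
      have "f y \<le> D (Inl a) (Inr y)" by (rule fle[OF y(1) that])
      then have "y \<in> B" unfolding B_def using y by simp
      then show ?thesis using y by blast
    qed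
    have Bne: "B \<noteq> {}" using near AX(2) by blast
    have BH: "B \<in> ?HY" unfolding hyperspace_def using Bc Bne B_def by auto
    have "hdist D (Inl ` A) (Inr ` B) \<le> r"
    proof (rule hD.hdist_le)
      show "Inl ` A \<subseteq> ?U" "Inr ` B \<subseteq> ?U" using AX B_def by auto
      show "Inl ` A \<noteq> {}" "Inr ` B \<noteq> {}" using AX Bne by auto
    next
      fix a :: "'a + 'b" and e' :: real assume "a \<in> Inl ` A" "e' > 0"
      then obtain x where x: "x \<in> A" "a = Inl x" by blast
      then obtain y where "y \<in> B" "D (Inl x) (Inr y) < r" using near by blast
      then show "\<exists>b\<in>Inr ` B. D a b \<le> r + e'" using x \<open>e' > 0\<close> by (intro bexI[of _ "Inr y"]) auto
    next
      fix b :: "'a + 'b" and e' :: real assume "b \<in> Inr ` B" "e' > 0"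
      then obtain y where y: "y \<in> B" "b = Inr y" by blast
      then have "f y < r + e'" using \<open>e' > 0\<close> unfolding B_def by auto
      then obtain x where "x \<in> A" "D (Inl x) (Inr y) < r + e'"
        using cInf_lessD[of "(\<lambda>a. D (Inl a) (Inr y)) ` A"] AX(2) unfolding f_def by auto
      then show "\<exists>a\<in>Inl ` A. D a b \<le> r + e'" using y by (intro bexI[of _ "Inl x"]) auto
    qed
    then show "\<exists>B\<in>?HY. D' (Inl A) (Inr B) \<le> r" using BH unfolding D'_def by auto
  next
    fix B assume B: "B \<in> ?HY"
    then have BY: "B \<subseteq> Y" "B \<noteq> {}" using hyp_sub by blast+
    define g where "g x = (INF b\<in>B. D (Inl x) (Inr b))" for x
    have bb: "bdd_below ((\<lambda>b. D (Inl x) (Inr b)) ` B)" if "x \<in> X" for x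
      by (rule bdd_belowI[where m=0]) (use F(1) BY that in blast)
    have gle: "g x \<le> D (Inl x) (Inr b)" if "x \<in> X" "b \<in> B" for x b
      unfolding g_def by (rule cINF_lower[OF bb[OF that(1)] that(2)])
    define A where "A = {x \<in> X. g x \<le> r}"
    have Ac: "closedin (Metric_space.mtopology X dX) A" unfolding A_def
    proof (rule closed_sub[OF X(1)])
      fix x x' assume xx: "x \<in> X" "x' \<in> X"
      have "g x - dX x' x \<le> g x'" unfolding g_def[of x']
      proof (rule cINF_greatest[OF BY(2)])
        fix b assume "b \<in> B"
        then have bY: "b \<in> Y" using BY by blast
        have "g x \<le> D (Inl x) (Inr b)" by (rule gle[OF xx(1) \<open>b \<in> B\<close>])
        moreover have "D (Inl x) (Inr b) \<le> dX x x' + D (Inl x') (Inr b)" by (rule F(3)[OF xx bY])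
        moreover have "dX x x' = dX x' x" by (rule pm_D(3)[OF pX xx])
        ultimately show "g x - dX x' x \<le> D (Inl x') (Inr b)" by linarith
      qed
      then show "g x \<le> g x' + dX x' x" by simp
    qed
    have near: "\<exists>x\<in>A. D (Inl x) (Inr b) < r" if "b \<in> B" for b
    proof -
      have bY: "b \<in> Y" using that BY(1) by blast
      obtain x where x: "x \<in> X" "D (Inl x) (Inr b) < r" using adm_hd(2)[OF sX sY D(1) D(2) bY] by blast
      have "g x \<le> D (Inl x) (Inr b)" by (rule gle[OF x(1) that])
      then have "x \<in> A" unfolding A_def using x by simp
      then show ?thesis using x by blast
    qed
    have Ane: "A \<noteq> {}" using near BY(2) by blast
    have AH: "A \<in> ?HX" unfolding hyperspace_def using Ac Ane A_def by auto
    have "hdist D (Inl ` A) (Inr ` B) \<le> r"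
    proof (rule hD.hdist_le)
      show "Inl ` A \<subseteq> ?U" "Inr ` B \<subseteq> ?U" using BY A_def by auto
      show "Inl ` A \<noteq> {}" "Inr ` B \<noteq> {}" using BY Ane by auto
    next
      fix b :: "'a + 'b" and e' :: real assume "b \<in> Inr ` B" "e' > 0"
      then obtain y where y: "y \<in> B" "b = Inr y" by blast
      then obtain x where "x \<in> A" "D (Inl x) (Inr y) < r" using near by blast
      then show "\<exists>a\<in>Inl ` A. D a b \<le> r + e'" using y \<open>e' > 0\<close> by (intro bexI[of _ "Inl x"]) auto
    next
      fix a :: "'a + 'b" and e' :: real assume "a \<in> Inl ` A" "e' > 0"
      then obtain x where x: "x \<in> A" "a = Inl x" by blast
      then have "g x < r + e'" using \<open>e' > 0\<close> unfolding A_def by auto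
      then obtain y where "y \<in> B" "D (Inl x) (Inr y) < r + e'"
        using cInf_lessD[of "(\<lambda>b. D (Inl x) (Inr b)) ` B"] BY(2) unfolding g_def by auto
      then show "\<exists>b\<in>Inr ` B. D a b \<le> r + e'" using x by (intro bexI[of _ "Inr y"]) auto
    qed
    then show "\<exists>A\<in>?HX. D' (Inl A) (Inr B) \<le> r" using AH unfolding D'_def by auto
  qed
  from gh_le[OF sHX sHY A' this] show "gh_dist ?HX (hdist dX) ?HY (hdist dY) \<le> gh_dist X dX Y dY + e"
    unfolding r_def .
qed



lemma compact_bnd: assumes M: "Metric_space X d" "compact_space (Metric_space.mtopology X d)"
  shows "bnd X d"
proof -
  have "Metric_space.mtotally_bounded X d X"
    using Metric_space.compact_space_eq_mcomplete_mtotally_bounded[OF M(1)] M(2) by blast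
  then have "Metric_space.mbounded X d X" by (rule Metric_space.mtotally_bounded_imp_mbounded[OF M(1)])
  then obtain x B where xB: "X \<subseteq> Metric_space.mcball X d x B"
    unfolding Metric_space.mbounded_def[OF M(1)] by blast
  show ?thesis unfolding bnd_def
  proof (intro exI ballI)
    fix y z assume yz: "y \<in> X" "z \<in> X"
    then have "d x y \<le> B" "d x z \<le> B" "x \<in> X" using xB Metric_space.in_mcball[OF M(1)] by blast+
    moreover have "d y z \<le> d y x + d x z" using Metric_space.triangle[OF M(1)] yz \<open>x \<in> X\<close> by blast
    moreover have "d y x = d x y" by (rule Metric_space.commute[OF M(1)])
    ultimately show "d y z \<le> 2 * B" by linarith
  qed
qed

lemma finite_bnd: assumes "finite S" shows "bnd S d"
proof -
  let ?c = "Max (insert 0 ((\<lambda>(x,y). d x y) ` (S \<times> S)))"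
  have "d x y \<le> ?c" if "x \<in> S" "y \<in> S" for x y
    by (rule Max_ge) (use assms that in auto)
  then show ?thesis unfolding bnd_def by blast
qed

definition gg :: "nat \<Rightarrow> nat \<Rightarrow> nat" where "gg i j = max i j * max i j + min i j"

lemma gg_sym: "gg i j = gg j i" unfolding gg_def by (simp add: max.commute min.commute)

lemma sq_lt: assumes "(M1::nat) < M2" "m1 \<le> M1" shows "M1 * M1 + m1 < M2 * M2 + m2"
proof -
  have "Suc M1 \<le> M2" using assms by simp
  then have "Suc M1 * Suc M1 \<le> M2 * M2" using mult_le_mono by blast
  then show ?thesis using assms(2) by simp
qed

lemma gg_inj: assumes "gg i j = gg u v" shows "{i, j} = {u, v}"
proof -
  have e: "max i j * max i j + min i j = max u v * max u v + min u v" using assms unfolding gg_def .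
  have "min i j \<le> max i j" "min u v \<le> max u v" by simp_all
  have M: "max i j = max u v"
  proof (rule ccontr)
    assume "max i j \<noteq> max u v"
    then consider "max i j < max u v" | "max u v < max i j" by linarith
    then show False
    proof cases
      case 1 then show False using sq_lt[OF 1 \<open>min i j \<le> max i j\<close>, of "min u v"] e by linarith
    next
      case 2 then show False using sq_lt[OF 2 \<open>min u v \<le> max u v\<close>, of "min i j"] e by linarith
    qed
  qed
  then have "min i j = min u v" using e by simp
  then show ?thesis using M by (auto simp: max_def min_def split: if_splits)
qed

lemma approx:
  assumes X: "Metric_space X dX" "compact_space (Metric_space.mtopology X dX)" "X \<noteq> {}"
    and e: "e > 0"
  shows "\<exists>(N::nat set) dN. Metric_space N dN \<and> finite N \<and> N \<noteq> {} \<and> general_position N dN \<and>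
            gh_dist X dX N dN \<le> e"
proof -
  have "Metric_space.mtotally_bounded X dX X"
    using Metric_space.compact_space_eq_mcomplete_mtotally_bounded[OF X(1)] X(2) by blast
  then have "\<exists>K. finite K \<and> K \<subseteq> X \<and> X \<subseteq> (\<Union>x\<in>K. Metric_space.mball X dX x (e/2))"
    unfolding Metric_space.mtotally_bounded_def[OF X(1)] using e by (simp only: half_gt_zero)
  then obtain K where K: "finite K" "K \<subseteq> X" "X \<subseteq> (\<Union>x\<in>K. Metric_space.mball X dX x (e/2))"
    by blast
  have Kne: "K \<noteq> {}" using K(3) X(3) by blast
  define n where "n = card K"
  obtain h where h: "bij_betw h {0..<n} K" using ex_bij_betw_nat_finite[OF K(1)] unfolding n_def by blast
  define N where "N = {0..<n}"
  have n0: "n > 0" using Kne K(1) unfolding n_def by (simp add: card_gt_0_iff)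
  have hN: "h i \<in> X" if "i \<in> N" for i using h K(2) that unfolding N_def bij_betw_def by blast
  define \<delta> where "\<delta> = e / 4"
  have d0: "\<delta> > 0" using e unfolding \<delta>_def by simp
  define G where "G = n * n + n"
  define \<eta>0 where "\<eta>0 = \<delta> / (real G + 1)"
  have eta00: "\<eta>0 > 0" using d0 unfolding \<eta>0_def by simp
  define b where "b i j = dX (h i) (h j)" for i j
  define Bad where "Bad = (\<lambda>(i,j,u,v). (b u v - b i j) / (real (gg i j) - real (gg u v))) ` (N \<times> N \<times> N \<times> N)"
  have fBad: "finite Bad" unfolding Bad_def N_def by simp
  have "infinite ({0<..<\<eta>0} - Bad)" by (rule Diff_infinite_finite[OF fBad infinite_Ioo[OF eta00]])
  then obtain \<eta> where eta: "\<eta> \<in> {0<..<\<eta>0}" "\<eta> \<notin> Bad" using infinite_imp_nonempty by blast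
  have eta0: "\<eta> > 0" "\<eta> < \<eta>0" using eta by auto
  have small: "\<eta> * real (gg i j) < \<delta>" if "i \<in> N" "j \<in> N" for i j
  proof -
    have "max i j \<le> n" "min i j \<le> n" using that unfolding N_def by auto
    then have "max i j * max i j \<le> n * n" by (intro mult_le_mono)
    then have "gg i j \<le> G" unfolding gg_def G_def using \<open>min i j \<le> n\<close> by linarith
    then have "real (gg i j) \<le> real G" by simp
    then have "\<eta> * real (gg i j) \<le> \<eta> * real G" by (rule mult_left_mono) (use eta0 in simp)
    also have "\<dots> \<le> \<eta>0 * real G" by (rule mult_right_mono) (use eta0 in simp_all)
    also have "\<dots> < \<eta>0 * (real G + 1)" using eta00 by (simp add: distrib_left)
    also have "\<dots> = \<delta>" unfolding \<eta>0_def by simp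
    finally show ?thesis .
  qed
  have gnn: "0 \<le> \<eta> * real (gg i j)" for i j using eta0 by simp
  have bnn: "0 \<le> b i j" for i j unfolding b_def by (rule Metric_space.nonneg[OF X(1)])
  have bsym: "b i j = b j i" for i j unfolding b_def by (rule Metric_space.commute[OF X(1)])
  have btri: "b i k \<le> b i j + b j k" if "i \<in> N" "j \<in> N" "k \<in> N" for i j k
    unfolding b_def by (rule Metric_space.triangle[OF X(1)]) (use hN that in blast)+
  define dN where "dN i j = (if i = j then 0 else b i j + \<delta> + \<eta> * real (gg i j))" for i j
  have dNsym: "dN i j = dN j i" for i j unfolding dN_def using bsym gg_sym by simp
  have dNpos: "i \<noteq> j \<Longrightarrow> dN i j > 0" for i j unfolding dN_def using bnn[of i j] gnn[of i j] d0 by simp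
  have strict: "dN x z < dN x y + dN y z"
    if "x \<in> N" "y \<in> N" "z \<in> N" "x \<noteq> y" "y \<noteq> z" "x \<noteq> z" for x y z
  proof -
    have "dN x z = b x z + \<delta> + \<eta> * real (gg x z)" unfolding dN_def using that by simp
    moreover have "dN x y = b x y + \<delta> + \<eta> * real (gg x y)" unfolding dN_def using that by simp
    moreover have "dN y z = b y z + \<delta> + \<eta> * real (gg y z)" unfolding dN_def using that by simp
    ultimately show ?thesis using btri[OF that(1-3)] small[OF that(1,3)] gnn[of x y] gnn[of y z] by linarith
  qed
  have MS: "Metric_space N dN"
  proof (rule Metric_space.intro)
    fix x y show "0 \<le> dN x y" using dNpos[of x y] unfolding dN_def by (cases "x = y") auto
    show "dN x y = dN y x" by (rule dNsym)
    assume "x \<in> N" "y \<in> N"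
    show "(dN x y = 0) = (x = y)" using dNpos[of x y] unfolding dN_def by auto
  next
    fix x y z assume xyz: "x \<in> N" "y \<in> N" "z \<in> N"
    have nn: "0 \<le> dN u v" for u v using dNpos[of u v] unfolding dN_def by (cases "u = v") auto
    show "dN x z \<le> dN x y + dN y z"
    proof (cases "x = z")
      case True then show ?thesis using nn[of x y] nn[of y z] unfolding dN_def by simp
    next
      case False
      show ?thesis
      proof (cases "x = y \<or> y = z")
        case True then show ?thesis unfolding dN_def by auto
      next
        case F2: False
        show ?thesis using strict[OF xyz] False F2 by fastforce
      qed
    qed
  qed
  have GP: "general_position N dN" unfolding general_position_def
  proof (intro conjI ballI impI)
    fix x y z assume "x \<in> N" "y \<in> N" "z \<in> N" "x \<noteq> y \<and> y \<noteq> z \<and> x \<noteq> z"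
    then show "dN x z < dN x y + dN y z" using strict by blast
  next
    fix x y u v assume xyuv: "x \<in> N" "y \<in> N" "u \<in> N" "v \<in> N" and c: "x \<noteq> y \<and> u \<noteq> v \<and> {x, y} \<noteq> {u, v}"
    show "dN x y \<noteq> dN u v"
    proof
      assume eq: "dN x y = dN u v"
      have gne: "gg x y \<noteq> gg u v" using gg_inj c by blast
      then have den: "real (gg x y) - real (gg u v) \<noteq> 0" by simp
      have "b x y + \<eta> * real (gg x y) = b u v + \<eta> * real (gg u v)" using eq c unfolding dN_def by simp
      then have "\<eta> * (real (gg x y) - real (gg u v)) = b u v - b x y" by (simp add: algebra_simps)
      then have "\<eta> = (b u v - b x y) / (real (gg x y) - real (gg u v))" using den by (simp add: eq_divide_eq)
      moreover have "(b u v - b x y) / (real (gg x y) - real (gg u v)) \<in> Bad"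
        unfolding Bad_def using xyuv by (intro image_eqI[of _ _ "(x,y,u,v)"]) auto
      ultimately show False using eta(2) by simp
    qed
  qed
  have finN: "finite N" "N \<noteq> {}" unfolding N_def using n0 by auto
  have sX: "sp X dX" unfolding sp_def using ms_pm[OF X(1)] compact_bnd[OF X(1,2)] X(3) by blast
  have sN: "sp N dN" unfolding sp_def using ms_pm[OF MS] finite_bnd[OF finN(1)] finN(2) by blast
  define C where "C x i = dX x (h i) + \<delta>" for x i
  have pX: "pm X dX" and pN: "pm N dN" using sX sN unfolding sp_def by auto
  note Xc = Metric_space.commute[OF X(1)] and Xt = Metric_space.triangle[OF X(1)]
  have A: "admissible X dX N dN (glue dX dN C)"
  proof (rule adm_glue[OF pX pN])
    fix x i assume "x \<in> X" "i \<in> N"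
    show "0 \<le> C x i" unfolding C_def using d0 Metric_space.nonneg[OF X(1)] by (simp add: add_nonneg_nonneg less_imp_le)
  next
    fix x x' i assume a: "x \<in> X" "x' \<in> X" "i \<in> N"
    show "C x i \<le> dX x x' + C x' i" unfolding C_def using Xt[OF a(1,2) hN[OF a(3)]] by simp
    have "dX x x' \<le> dX x (h i) + dX (h i) x'" using Xt[OF a(1) hN[OF a(3)] a(2)] .
    then show "dX x x' \<le> C x i + C x' i" unfolding C_def using Xc[of "h i" x'] d0 by simp
  next
    fix x i j assume a: "x \<in> X" "i \<in> N" "j \<in> N"
    have "b j i \<le> dN j i" unfolding dN_def using bnn[of j i] gnn[of j i] d0
      by (cases "j = i") (simp_all add: b_def Metric_space.zero[OF X(1)] hN a)
    moreover have "dX x (h i) \<le> dX x (h j) + dX (h j) (h i)" using Xt[OF a(1) hN[OF a(3)] hN[OF a(2)]] .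
    ultimately show "C x i \<le> C x j + dN j i" unfolding C_def b_def by simp
    have "dN i j \<le> b i j + 2 * \<delta>"
      unfolding dN_def using small[OF a(2,3)] bnn[of i j] d0 by auto
    moreover have "b i j \<le> dX x (h i) + dX x (h j)"
      unfolding b_def using Xt[OF hN[OF a(2)] a(1) hN[OF a(3)]] Xc[of "h i" x] by simp
    ultimately show "dN i j \<le> C x i + C x j" unfolding C_def by simp
  qed
  have "hdist (glue dX dN C) (Inl ` X) (Inr ` N) \<le> e"
  proof (rule adm_hdist_le[OF sX sN A])
    fix x assume x: "x \<in> X"
    then obtain k where k: "k \<in> K" "x \<in> Metric_space.mball X dX k (e/2)" using K(3) by blast
    then have dk: "dX k x < e/2" using Metric_space.in_mball[OF X(1)] by blast
    obtain i where i: "i \<in> N" "h i = k" using h k(1) unfolding bij_betw_def N_def by blast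
    have "C x i \<le> e" unfolding C_def \<delta>_def using dk i(2) Xc[of x k] e by simp
    then show "\<exists>i\<in>N. glue dX dN C (Inl x) (Inr i) \<le> e" using i(1) by auto
  next
    fix i assume i: "i \<in> N"
    have "C (h i) i \<le> e" unfolding C_def \<delta>_def using Metric_space.zero[OF X(1) hN[OF i] hN[OF i]] e by simp
    then show "\<exists>x\<in>X. glue dX dN C (Inl x) (Inr i) \<le> e" using hN[OF i] by auto
  qed
  then have "gh_dist X dX N dN \<le> e" by (rule gh_le[OF sX sN A])
  then show ?thesis using MS finN GP by blast
qed



theorem mainTheorem20:
  assumes fin: "\<forall>(X::nat set) dX (Y::nat set) dY.
      Metric_space X dX \<and> finite X \<and> X \<noteq> {} \<and> general_position X dX \<and>
      Metric_space Y dY \<and> finite Y \<and> Y \<noteq> {} \<and> general_position Y dY \<longrightarrow>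
      gh_dist (hyperspace X dX) (hdist dX) (hyperspace Y dY) (hdist dY) = gh_dist X dX Y dY"
  and X: "Metric_space X dX" "compact_space (Metric_space.mtopology X dX)" "X \<noteq> {}"
  and Y: "Metric_space Y dY" "compact_space (Metric_space.mtopology Y dY)" "Y \<noteq> {}"
  shows "gh_dist (hyperspace X dX) (hdist dX) (hyperspace Y dY) (hdist dY) = gh_dist X dX Y dY"
proof -
  have bX: "bnd X dX" and bY: "bnd Y dY" using compact_bnd X Y by blast+
  have sX: "sp X dX" using ms_pm[OF X(1)] bX X(3) unfolding sp_def by blast
  have sY: "sp Y dY" using ms_pm[OF Y(1)] bY Y(3) unfolding sp_def by blast
  have sHX: "sp (hyperspace X dX) (hdist dX)" by (rule hyp_sp[OF X(1) bX X(3)])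
  have sHY: "sp (hyperspace Y dY) (hdist dY)" by (rule hyp_sp[OF Y(1) bY Y(3)])
  have le: "gh_dist (hyperspace X dX) (hdist dX) (hyperspace Y dY) (hdist dY) \<le> gh_dist X dX Y dY"
    by (rule hyp_lip[OF X(1) bX X(3) Y(1) bY Y(3)])
  have ge: "gh_dist X dX Y dY \<le> gh_dist (hyperspace X dX) (hdist dX) (hyperspace Y dY) (hdist dY)"
  proof (rule field_le_epsilon)
    fix e :: real assume e: "e > 0"
    define \<epsilon> where "\<epsilon> = e / 4"
    have eps: "\<epsilon> > 0" using e unfolding \<epsilon>_def by simp
    obtain N1 :: "nat set" and d1 where N1: "Metric_space N1 d1" "finite N1" "N1 \<noteq> {}"
      "general_position N1 d1" "gh_dist X dX N1 d1 \<le> \<epsilon>"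
      using approx[OF X eps] by blast
    obtain N2 :: "nat set" and d2 where N2: "Metric_space N2 d2" "finite N2" "N2 \<noteq> {}"
      "general_position N2 d2" "gh_dist Y dY N2 d2 \<le> \<epsilon>"
      using approx[OF Y eps] by blast
    have b1: "bnd N1 d1" and b2: "bnd N2 d2" using finite_bnd N1(2) N2(2) by blast+
    have s1: "sp N1 d1" using ms_pm[OF N1(1)] b1 N1(3) unfolding sp_def by blast
    have s2: "sp N2 d2" using ms_pm[OF N2(1)] b2 N2(3) unfolding sp_def by blast
    have sH1: "sp (hyperspace N1 d1) (hdist d1)" by (rule hyp_sp[OF N1(1) b1 N1(3)])
    have sH2: "sp (hyperspace N2 d2) (hdist d2)" by (rule hyp_sp[OF N2(1) b2 N2(3)])
    have F: "gh_dist (hyperspace N1 d1) (hdist d1) (hyperspace N2 d2) (hdist d2) = gh_dist N1 d1 N2 d2"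
      using fin N1 N2 by blast
    have t1: "gh_dist X dX Y dY \<le> gh_dist X dX N1 d1 + gh_dist N1 d1 Y dY" by (rule gh_tri[OF sX s1 sY])
    have t2: "gh_dist N1 d1 Y dY \<le> gh_dist N1 d1 N2 d2 + gh_dist N2 d2 Y dY" by (rule gh_tri[OF s1 s2 sY])
    have t3: "gh_dist N2 d2 Y dY = gh_dist Y dY N2 d2" by (rule gh_sym_eq[OF sY s2])
    have t4: "gh_dist (hyperspace N1 d1) (hdist d1) (hyperspace N2 d2) (hdist d2) \<le>
       gh_dist (hyperspace N1 d1) (hdist d1) (hyperspace X dX) (hdist dX) +
       gh_dist (hyperspace X dX) (hdist dX) (hyperspace N2 d2) (hdist d2)" by (rule gh_tri[OF sH1 sHX sH2])
    have t5: "gh_dist (hyperspace X dX) (hdist dX) (hyperspace N2 d2) (hdist d2) \<le>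
       gh_dist (hyperspace X dX) (hdist dX) (hyperspace Y dY) (hdist dY) +
       gh_dist (hyperspace Y dY) (hdist dY) (hyperspace N2 d2) (hdist d2)" by (rule gh_tri[OF sHX sHY sH2])
    have t6: "gh_dist (hyperspace N1 d1) (hdist d1) (hyperspace X dX) (hdist dX) \<le> gh_dist N1 d1 X dX"
      by (rule hyp_lip[OF N1(1) b1 N1(3) X(1) bX X(3)])
    have t7: "gh_dist N1 d1 X dX = gh_dist X dX N1 d1" by (rule gh_sym_eq[OF sX s1])
    have t8: "gh_dist (hyperspace Y dY) (hdist dY) (hyperspace N2 d2) (hdist d2) \<le> gh_dist Y dY N2 d2"
      by (rule hyp_lip[OF Y(1) bY Y(3) N2(1) b2 N2(3)])
    show "gh_dist X dX Y dY \<le> gh_dist (hyperspace X dX) (hdist dX) (hyperspace Y dY) (hdist dY) + e"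
      using t1 t2 t3 t4 t5 t6 t7 t8 F N1(5) N2(5) unfolding \<epsilon>_def by linarith
  qed
  show ?thesis using le ge by linarith
qed

end
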